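(* Let $A=\mathrm{diag}([-1],G_1,\dots,G_m,[1])\in\mathbb{R}^{n\times n}$, $m\geq 1$ (each of $[-1]$, $[1]$ possibly absent), with $G_j=\begin{bmatrix}c_j&s_j\\-s_j&c_j\end{bmatrix}$, $c_j^2+s_j^2=1$, $s_j\neq0$, $-1=c_0<c_1<\cdots<c_m<1=c_{m+1}$. Let $v_0$ be a unit norm vector with $d(A,v_0)\geq 2$ such that $v_0^{(\ell)}\neq 0$ for some $1\leq\ell\leq m$ and $v_0^{(j)}\neq 0$ for some present block index $0\leq j\leq m+1$ with $c_\ell c_j\leq 0$. Then every limit vector $v_*$ of the sequence $\{v_k\}$ of the iteration ACI($1$) below satisfies $v_*^TAv_*=0$, $\|Av_*\|^2-(v_*^TAv_* )^2=1$, and $$\min_{\alpha\in\mathbb{R}}\|A-\alpha I\|=\|A\|=\|Av_*\|=1.$$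
   Context: Block partitioning: $v=[v^{(0)};v^{(1)};\dots;v^{(m)};v^{(m+1)}]$ with $v^{(0)}\in\mathbb{R}$ present only if the block $[-1]$ is, $v^{(j)}\in\mathbb{R}^2$ for $1\leq j\leq m$ (conforming with $G_j$), and $v^{(m+1)}\in\mathbb{R}$ present only if the block $[1]$ is. ACI($1$): for $k=0,1,2,\dots$: $\widetilde w_k=(A-\alpha_kI)v_k$ with $\alpha_k=v_k^TAv_k$; $w_k=\widetilde w_k/\|\widetilde w_k\|$; $\widetilde v_{k+1}=(A^T-\beta_kI)w_k$ with $\beta_k=w_k^TAw_k$; $v_{k+1}=\widetilde v_{k+1}/\|\widetilde v_{k+1}\|$. $d(A,v)$ is the grade of $v$ w.r.t. $A$ (degree of the monic polynomial $p$ of smallest degree with $p(A)v=0$); $\|\cdot\|$ is the Euclidean vector norm and the induced spectral matrix norm. *)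

theory Defs
  imports Complex_Main
begin

text \<open>Vectors in R^n are functions nat => real (only indices < n matter);
  n x n matrices are functions nat => nat => real (only indices < n matter).\<close>

definition vinner :: "nat \<Rightarrow> (nat \<Rightarrow> real) \<Rightarrow> (nat \<Rightarrow> real) \<Rightarrow> real" where
  "vinner n x y = (\<Sum>i<n. x i * y i)"

definition vnorm :: "nat \<Rightarrow> (nat \<Rightarrow> real) \<Rightarrow> real" where
  "vnorm n x = sqrt (\<Sum>i<n. (x i)\<^sup>2)"

definition mv :: "nat \<Rightarrow> (nat \<Rightarrow> nat \<Rightarrow> real) \<Rightarrow> (nat \<Rightarrow> real) \<Rightarrow> (nat \<Rightarrow> real)" where
  "mv n M x = (\<lambda>i. if i < n then (\<Sum>k<n. M i k * x k) else 0)"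

definition mtrans :: "(nat \<Rightarrow> nat \<Rightarrow> real) \<Rightarrow> (nat \<Rightarrow> nat \<Rightarrow> real)" where
  "mtrans M = (\<lambda>i k. M k i)"

definition opnorm :: "nat \<Rightarrow> (nat \<Rightarrow> nat \<Rightarrow> real) \<Rightarrow> real" where
  "opnorm n M = Sup {vnorm n (mv n M x) | x. vnorm n x = 1}"

definition grade :: "nat \<Rightarrow> (nat \<Rightarrow> nat \<Rightarrow> real) \<Rightarrow> (nat \<Rightarrow> real) \<Rightarrow> nat" where
  "grade n M v = (LEAST k. \<exists>a :: nat \<Rightarrow> real.
      \<forall>i<n. ((mv n M ^^ k) v) i + (\<Sum>t<k. a t * ((mv n M ^^ t) v) i) = 0)"

text \<open>Block structure of A = diag([-1], G_1, ..., G_m, [1]); hasNeg / hasPos say whether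
  the blocks [-1] and [1] are present.\<close>
definition boff :: "bool \<Rightarrow> nat" where
  "boff hasNeg = (if hasNeg then 1 else 0)"

definition bdim :: "bool \<Rightarrow> bool \<Rightarrow> nat \<Rightarrow> nat" where
  "bdim hasNeg hasPos m = boff hasNeg + 2 * m + (if hasPos then 1 else 0)"

definition blockA :: "bool \<Rightarrow> bool \<Rightarrow> nat \<Rightarrow> (nat \<Rightarrow> real) \<Rightarrow> (nat \<Rightarrow> real)
    \<Rightarrow> nat \<Rightarrow> nat \<Rightarrow> real" where
  "blockA hasNeg hasPos m c s i k =
     (let off = boff hasNeg in
      if i < bdim hasNeg hasPos m \<and> k < bdim hasNeg hasPos m then
        (if hasNeg \<and> i = 0 then (if k = 0 then -1 else 0)
         else if hasPos \<and> i = off + 2 * m then (if k = i then 1 else 0)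
         else (let j = (i - off) div 2 + 1; p = off + 2 * (j - 1) in
               if i = p then (if k = p then c j else if k = p + 1 then s j else 0)
               else (if k = p then - s j else if k = p + 1 then c j else 0)))
      else 0)"

text \<open>Block j of v is present and nonzero (j = 0: block [-1]; 1 \<le> j \<le> m: G_j; j = m+1: block [1]).\<close>
definition block_nz :: "bool \<Rightarrow> bool \<Rightarrow> nat \<Rightarrow> (nat \<Rightarrow> real) \<Rightarrow> nat \<Rightarrow> bool" where
  "block_nz hasNeg hasPos m v j =
     (if j = 0 then hasNeg \<and> v 0 \<noteq> 0
      else if j = m + 1 then hasPos \<and> v (boff hasNeg + 2 * m) \<noteq> 0
      else if j \<le> m then (v (boff hasNeg + 2 * (j - 1)) \<noteq> 0 \<or> v (boff hasNeg + 2 * (j - 1) + 1) \<noteq> 0)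
      else False)"

definition aci_step :: "nat \<Rightarrow> (nat \<Rightarrow> nat \<Rightarrow> real) \<Rightarrow> (nat \<Rightarrow> real) \<Rightarrow> (nat \<Rightarrow> real)" where
  "aci_step n A v =
     (let \<alpha> = vinner n v (mv n A v);
          wt = (\<lambda>i. mv n A v i - \<alpha> * v i);
          w = (\<lambda>i. wt i / vnorm n wt);
          \<beta> = vinner n w (mv n A w);
          vt = (\<lambda>i. mv n (mtrans A) w i - \<beta> * w i)
      in (\<lambda>i. vt i / vnorm n vt))"

definition aci_seq :: "nat \<Rightarrow> (nat \<Rightarrow> nat \<Rightarrow> real) \<Rightarrow> (nat \<Rightarrow> real) \<Rightarrow> nat \<Rightarrow> (nat \<Rightarrow> real)" where
  "aci_seq n A v0 k = (aci_step n A ^^ k) v0"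

definition limit_vector :: "nat \<Rightarrow> (nat \<Rightarrow> nat \<Rightarrow> real) \<Rightarrow> (nat \<Rightarrow> real) \<Rightarrow> bool" where
  "limit_vector n vs vstar =
     (\<exists>r. strict_mono r \<and> (\<forall>i<n. (\<lambda>k. vs (r k) i) \<longlonglongrightarrow> vstar i))"

end

theory Submission
  imports Defs
begin

lemma sum_split_aux:
  "(\<Sum>i<off + 2*m. g i) = (\<Sum>i<off. g i) + (\<Sum>j<m. g (off + 2*j) + g (off + 2*j + 1))"
  for g :: "nat \<Rightarrow> real"
proof (induction m)
  case 0 then show ?case by simp
next
  case (Suc m)
  have "off + 2 * Suc m = Suc (Suc (off + 2*m))" by simp
  then show ?case using Suc by (simp add: algebra_simps)
qed

lemma sum_split:
  "(\<Sum>i<bdim hN hP m. g i) = (if hN then g 0 else 0)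
      + (\<Sum>j<m. g (boff hN + 2*j) + g (boff hN + 2*j + 1))
      + (if hP then g (boff hN + 2*m) else 0)"
  for g :: "nat \<Rightarrow> real"
proof -
  have "(\<Sum>i<bdim hN hP m. g i) = (\<Sum>i<boff hN + 2*m. g i) + (if hP then g (boff hN + 2*m) else 0)"
    by (simp add: bdim_def)
  also have "(\<Sum>i<boff hN + 2*m. g i) = (\<Sum>i<boff hN. g i) + (\<Sum>j<m. g (boff hN + 2*j) + g (boff hN + 2*j + 1))"
    by (rule sum_split_aux)
  also have "(\<Sum>i<boff hN. g i) = (if hN then g 0 else 0)" by (simp add: boff_def)
  finally show ?thesis .
qed

lemma rowN:
  assumes "hN"
  shows "blockA hN hP m c s 0 k = (if k = 0 then -1 else 0)"
  using assms by (simp add: blockA_def bdim_def boff_def Let_def)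

lemma rowP:
  assumes "hP"
  shows "blockA hN hP m c s (boff hN + 2*m) k = (if k = boff hN + 2*m then 1 else 0)"
  using assms by (auto simp add: blockA_def bdim_def boff_def Let_def)

lemma rowG0:
  assumes "j < m"
  shows "blockA hN hP m c s (boff hN + 2*j) k =
    (if k = boff hN + 2*j then c (Suc j) else if k = boff hN + 2*j + 1 then s (Suc j) else 0)"
  using assms by (auto simp add: blockA_def bdim_def boff_def Let_def)

lemma rowG1:
  assumes "j < m"
  shows "blockA hN hP m c s (boff hN + 2*j + 1) k =
    (if k = boff hN + 2*j then - s (Suc j) else if k = boff hN + 2*j + 1 then c (Suc j) else 0)"
  using assms by (auto simp add: blockA_def bdim_def boff_def Let_def)


lemma sum_two:
  fixes x y :: real and u :: "nat \<Rightarrow> real" and p n :: nat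
  assumes "p + 1 < n"
  shows "(\<Sum>k<n. (if k = p then x else if k = p+1 then y else 0) * u k) = x * u p + y * u (p+1)"
    (is "?L = ?R")
proof -
  have "?L = (\<Sum>k<n. (if k = p then x * u p else 0) + (if k = p+1 then y * u (p+1) else 0))"
    by (rule sum.cong) auto
  also have "\<dots> = ?R" using assms by (simp add: sum.distrib)
  finally show ?thesis .
qed

lemma bd: "j < m \<Longrightarrow> boff hN + 2*j + 1 < bdim hN hP m" by (simp add: bdim_def)
lemma bdN: "hN \<Longrightarrow> 0 < bdim hN hP m" by (simp add: bdim_def boff_def)
lemma bdP: "hP \<Longrightarrow> boff hN + 2*m < bdim hN hP m" by (simp add: bdim_def)

lemma mvA_N: "hN \<Longrightarrow> mv (bdim hN hP m) (blockA hN hP m c s) u 0 = - u 0"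
  by (simp add: mv_def rowN bdN if_distrib[of "\<lambda>x. x * _"] cong: if_cong)

lemma mvA_P: "hP \<Longrightarrow> mv (bdim hN hP m) (blockA hN hP m c s) u (boff hN + 2*m) = u (boff hN + 2*m)"
  by (simp add: mv_def rowP bdP if_distrib[of "\<lambda>x. x * _"] cong: if_cong)

lemma mvA_G0: "j < m \<Longrightarrow> mv (bdim hN hP m) (blockA hN hP m c s) u (boff hN + 2*j)
   = c (Suc j) * u (boff hN + 2*j) + s (Suc j) * u (boff hN + 2*j + 1)"
  using sum_two[where p="boff hN + 2*j" and n="bdim hN hP m" and x="c (Suc j)" and y="s (Suc j)" and u=u] bd[of j m hN hP]
  by (simp add: mv_def rowG0)

lemma mvA_G1: "j < m \<Longrightarrow> mv (bdim hN hP m) (blockA hN hP m c s) u (boff hN + 2*j + 1)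
   = - s (Suc j) * u (boff hN + 2*j) + c (Suc j) * u (boff hN + 2*j + 1)"
  using sum_two[where p="boff hN + 2*j" and n="bdim hN hP m" and x="- s (Suc j)" and y="c (Suc j)" and u=u] bd[of j m hN hP]
  by (simp add: mv_def rowG1[simplified])


lemma mvT_expand:
  assumes "i < bdim hN hP m"
  shows "mv (bdim hN hP m) (mtrans (blockA hN hP m c s)) u i =
     (if hN then blockA hN hP m c s 0 i * u 0 else 0)
      + (\<Sum>j<m. blockA hN hP m c s (boff hN + 2*j) i * u (boff hN + 2*j)
            + blockA hN hP m c s (boff hN + 2*j + 1) i * u (boff hN + 2*j + 1))
      + (if hP then blockA hN hP m c s (boff hN + 2*m) i * u (boff hN + 2*m) else 0)"
  using assms unfolding mv_def mtrans_def by (simp add: sum_split[where g="\<lambda>k. blockA hN hP m c s k i * u k"])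

lemma boffN: "hN \<Longrightarrow> boff hN = 1" by (simp add: boff_def)

lemma mvT_G0:
  assumes "j < m"
  shows "mv (bdim hN hP m) (mtrans (blockA hN hP m c s)) u (boff hN + 2*j)
     = c (Suc j) * u (boff hN + 2*j) + (- s (Suc j)) * u (boff hN + 2*j + 1)"
proof -
  have i: "boff hN + 2*j < bdim hN hP m" using assms by (simp add: bdim_def)
  have a: "(if hN then blockA hN hP m c s 0 (boff hN + 2*j) * u 0 else 0) = 0"
    by (auto simp: rowN boffN)
  have b: "(if hP then blockA hN hP m c s (boff hN + 2*m) (boff hN + 2*j) * u (boff hN + 2*m) else 0) = 0"
    using assms by (auto simp: rowP)
  have c: "(\<Sum>j'<m. blockA hN hP m c s (boff hN + 2*j') (boff hN + 2*j) * u (boff hN + 2*j')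
            + blockA hN hP m c s (boff hN + 2*j' + 1) (boff hN + 2*j) * u (boff hN + 2*j' + 1))
        = (\<Sum>j'<m. if j' = j then c (Suc j) * u (boff hN + 2*j) + (- s (Suc j)) * u (boff hN + 2*j + 1) else 0)"
  proof (rule sum.cong[OF refl])
    fix j' assume "j' \<in> {..<m}"
    then have j': "j' < m" by simp
    have ne: "boff hN + 2*j \<noteq> boff hN + 2*j' + 1" by presburger
    show "blockA hN hP m c s (boff hN + 2*j') (boff hN + 2*j) * u (boff hN + 2*j')
            + blockA hN hP m c s (boff hN + 2*j' + 1) (boff hN + 2*j) * u (boff hN + 2*j' + 1)
          = (if j' = j then c (Suc j) * u (boff hN + 2*j) + (- s (Suc j)) * u (boff hN + 2*j + 1) else 0)"
      unfolding rowG0[OF j'] rowG1[OF j'] using ne by auto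
  qed
  show ?thesis unfolding mvT_expand[OF i] a b c using assms by simp
qed

lemma mvT_G1:
  assumes "j < m"
  shows "mv (bdim hN hP m) (mtrans (blockA hN hP m c s)) u (boff hN + 2*j + 1)
     = - (- s (Suc j)) * u (boff hN + 2*j) + c (Suc j) * u (boff hN + 2*j + 1)"
proof -
  have i: "boff hN + 2*j + 1 < bdim hN hP m" using assms by (simp add: bdim_def)
  have a: "(if hN then blockA hN hP m c s 0 (boff hN + 2*j + 1) * u 0 else 0) = 0"
    by (auto simp: rowN boffN)
  have b: "(if hP then blockA hN hP m c s (boff hN + 2*m) (boff hN + 2*j + 1) * u (boff hN + 2*m) else 0) = 0"
    using assms by (auto simp: rowP)
  have c: "(\<Sum>j'<m. blockA hN hP m c s (boff hN + 2*j') (boff hN + 2*j + 1) * u (boff hN + 2*j')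
            + blockA hN hP m c s (boff hN + 2*j' + 1) (boff hN + 2*j + 1) * u (boff hN + 2*j' + 1))
        = (\<Sum>j'<m. if j' = j then - (- s (Suc j)) * u (boff hN + 2*j) + c (Suc j) * u (boff hN + 2*j + 1) else 0)"
  proof (rule sum.cong[OF refl])
    fix j' assume "j' \<in> {..<m}"
    then have j': "j' < m" by simp
    have ne: "boff hN + 2*j + 1 \<noteq> boff hN + 2*j'" by presburger
    show "blockA hN hP m c s (boff hN + 2*j') (boff hN + 2*j + 1) * u (boff hN + 2*j')
            + blockA hN hP m c s (boff hN + 2*j' + 1) (boff hN + 2*j + 1) * u (boff hN + 2*j' + 1)
          = (if j' = j then - (- s (Suc j)) * u (boff hN + 2*j) + c (Suc j) * u (boff hN + 2*j + 1) else 0)"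
      unfolding rowG0[OF j'] rowG1[OF j'] using ne by auto
  qed
  show ?thesis unfolding mvT_expand[OF i] a b c using assms by simp
qed

lemma mvT_N:
  assumes "hN"
  shows "mv (bdim hN hP m) (mtrans (blockA hN hP m c s)) u 0 = - u 0"
proof -
  have i: "0 < bdim hN hP m" using assms by (simp add: bdim_def boff_def)
  have c: "(\<Sum>j'<m. blockA hN hP m c s (boff hN + 2*j') 0 * u (boff hN + 2*j')
            + blockA hN hP m c s (boff hN + 2*j' + 1) 0 * u (boff hN + 2*j' + 1)) = 0"
  proof (rule sum.neutral, rule ballI)
    fix j' assume "j' \<in> {..<m}"
    then have j': "j' < m" by simp
    show "blockA hN hP m c s (boff hN + 2*j') 0 * u (boff hN + 2*j')
            + blockA hN hP m c s (boff hN + 2*j' + 1) 0 * u (boff hN + 2*j' + 1) = 0"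
      unfolding rowG0[OF j'] rowG1[OF j'] using j' assms by (auto simp: boffN)
  qed
  have b: "(if hP then blockA hN hP m c s (boff hN + 2*m) 0 * u (boff hN + 2*m) else 0) = 0"
  proof (cases hP)
    case True show ?thesis unfolding rowP[OF True] using True assms by (simp add: boffN)
  qed simp
  show ?thesis unfolding mvT_expand[OF i] c b using assms by (simp add: rowN)
qed

lemma mvT_P:
  assumes "hP"
  shows "mv (bdim hN hP m) (mtrans (blockA hN hP m c s)) u (boff hN + 2*m) = u (boff hN + 2*m)"
proof -
  have i: "boff hN + 2*m < bdim hN hP m" using assms by (simp add: bdim_def)
  have c: "(\<Sum>j'<m. blockA hN hP m c s (boff hN + 2*j') (boff hN + 2*m) * u (boff hN + 2*j')
            + blockA hN hP m c s (boff hN + 2*j' + 1) (boff hN + 2*m) * u (boff hN + 2*j' + 1)) = 0"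
  proof (rule sum.neutral, rule ballI)
    fix j' assume "j' \<in> {..<m}"
    then have j': "j' < m" by simp
    show "blockA hN hP m c s (boff hN + 2*j') (boff hN + 2*m) * u (boff hN + 2*j')
            + blockA hN hP m c s (boff hN + 2*j' + 1) (boff hN + 2*m) * u (boff hN + 2*j' + 1) = 0"
      unfolding rowG0[OF j'] rowG1[OF j'] using j' assms by (auto simp: boffN)
  qed
  have a: "(if hN then blockA hN hP m c s 0 (boff hN + 2*m) * u 0 else 0) = 0"
  proof (cases hN)
    case True show ?thesis unfolding rowN[OF True] using True assms by (simp add: boffN)
  qed simp
  show ?thesis unfolding mvT_expand[OF i] c a using assms by (simp add: rowP)
qed


definition good :: "bool \<Rightarrow> bool \<Rightarrow> nat \<Rightarrow> (nat\<Rightarrow>real) \<Rightarrow> (nat\<Rightarrow>real) \<Rightarrow> (nat\<Rightarrow>nat\<Rightarrow>real) \<Rightarrow> bool" where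
 "good hN hP m c t M \<longleftrightarrow> (\<forall>u. (hN \<longrightarrow> mv (bdim hN hP m) M u 0 = - u 0)
    \<and> (hP \<longrightarrow> mv (bdim hN hP m) M u (boff hN + 2*m) = u (boff hN + 2*m))
    \<and> (\<forall>j<m. mv (bdim hN hP m) M u (boff hN + 2*j) = c (Suc j) * u (boff hN + 2*j) + t (Suc j) * u (boff hN + 2*j + 1)
         \<and> mv (bdim hN hP m) M u (boff hN + 2*j + 1) = - t (Suc j) * u (boff hN + 2*j) + c (Suc j) * u (boff hN + 2*j + 1)))"

lemma good_A: "good hN hP m c s (blockA hN hP m c s)"
  unfolding good_def
  apply (intro allI conjI impI)
     apply (erule mvA_N)
    apply (erule mvA_P)
   apply (erule mvA_G0)
  apply (erule mvA_G1)
  done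

lemma good_T: "good hN hP m c (\<lambda>j. - s j) (mtrans (blockA hN hP m c s))"
  unfolding good_def
  apply (intro allI conjI impI)
     apply (erule mvT_N)
    apply (erule mvT_P)
   apply (erule mvT_G0)
  apply (erule mvT_G1)
  done

definition PB :: "bool \<Rightarrow> nat \<Rightarrow> (nat \<Rightarrow> real) \<Rightarrow> nat \<Rightarrow> real" where
 "PB hN m u j = (if j = 0 then (u 0)^2 else if j = Suc m then (u (boff hN + 2*m))^2
     else (u (boff hN + 2*(j-1)))^2 + (u (boff hN + 2*(j-1) + 1))^2)"

definition present :: "bool \<Rightarrow> bool \<Rightarrow> nat \<Rightarrow> nat \<Rightarrow> bool" where
 "present hN hP m j \<longleftrightarrow> j \<le> Suc m \<and> (j = 0 \<longrightarrow> hN) \<and> (j = Suc m \<longrightarrow> hP)"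

lemma rot_id:
  fixes c t g x y :: real
  assumes "c^2 + t^2 = 1"
  shows "((c*x + t*y) - g*x)^2 + ((- t*x + c*y) - g*y)^2 = (1 - 2*g*c + g^2) * (x^2 + y^2)"
proof -
  have "((c*x + t*y) - g*x)^2 + ((- t*x + c*y) - g*y)^2 = ((c-g)^2 + t^2) * (x^2 + y^2)"
    by (simp add: power2_eq_square algebra_simps)
  also have "(c-g)^2 + t^2 = (c^2 + t^2) - 2*g*c + g^2" by (simp add: power2_eq_square algebra_simps)
  finally show ?thesis using assms by simp
qed

lemma PB_block:
  assumes g: "good hN hP m c t M" and cs: "\<forall>j\<in>{1..m}. (c j)^2 + (t j)^2 = 1"
    and c0: "c 0 = -1" and cm: "c (Suc m) = 1" and pj: "present hN hP m j"
  shows "PB hN m (\<lambda>i. mv (bdim hN hP m) M u i - \<gamma> * u i) j = (1 - 2*\<gamma>*c j + \<gamma>^2) * PB hN m u j"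
proof -
  consider "j = 0" | "j = Suc m" | "1 \<le> j \<and> j \<le> m" using pj unfolding present_def by linarith
  then show ?thesis
  proof cases
    case 1
    then have "hN" using pj unfolding present_def by simp
    then have "mv (bdim hN hP m) M u 0 = - u 0" using g unfolding good_def by blast
    then show ?thesis using 1 c0 by (simp add: PB_def power2_eq_square algebra_simps)
  next
    case 2
    then have "hP" using pj unfolding present_def by simp
    then have "mv (bdim hN hP m) M u (boff hN + 2*m) = u (boff hN + 2*m)" using g unfolding good_def by blast
    then show ?thesis using 2 cm by (simp add: PB_def power2_eq_square algebra_simps)
  next
    case 3
    define j0 where "j0 = j - 1"
    have j0: "j0 < m" "j = Suc j0" using 3 unfolding j0_def by auto
    have e: "mv (bdim hN hP m) M u (boff hN + 2*j0) = c (Suc j0) * u (boff hN + 2*j0) + t (Suc j0) * u (boff hN + 2*j0 + 1)"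
      "mv (bdim hN hP m) M u (boff hN + 2*j0 + 1) = - t (Suc j0) * u (boff hN + 2*j0) + c (Suc j0) * u (boff hN + 2*j0 + 1)"
      using g j0 unfolding good_def by blast+
    have ct: "(c j)^2 + (t j)^2 = 1" using cs 3 by auto
    have "PB hN m (\<lambda>i. mv (bdim hN hP m) M u i - \<gamma> * u i) j =
      ((c j * u (boff hN + 2*j0) + t j * u (boff hN + 2*j0 + 1)) - \<gamma> * u (boff hN + 2*j0))^2
      + ((- t j * u (boff hN + 2*j0) + c j * u (boff hN + 2*j0 + 1)) - \<gamma> * u (boff hN + 2*j0 + 1))^2"
      unfolding PB_def using j0 e by (simp del: add_Suc_right add: Suc_eq_plus1[symmetric])
    also have "\<dots> = (1 - 2*\<gamma>*c j + \<gamma>^2) * ((u (boff hN + 2*j0))^2 + (u (boff hN + 2*j0 + 1))^2)"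
      by (rule rot_id[OF ct])
    also have "(u (boff hN + 2*j0))^2 + (u (boff hN + 2*j0 + 1))^2 = PB hN m u j"
      unfolding PB_def using j0 by simp
    finally show ?thesis .
  qed
qed

lemma orth:
  assumes g: "good hN hP m c t M" and cs: "\<forall>j\<in>{1..m}. (c j)^2 + (t j)^2 = 1"
  shows "(\<Sum>i<bdim hN hP m. (mv (bdim hN hP m) M u i)^2) = (\<Sum>i<bdim hN hP m. (u i)^2)"
proof -
  have b: "(\<Sum>j<m. (mv (bdim hN hP m) M u (boff hN + 2*j))^2 + (mv (bdim hN hP m) M u (boff hN + 2*j + 1))^2)
     = (\<Sum>j<m. (u (boff hN + 2*j))^2 + (u (boff hN + 2*j + 1))^2)"
  proof (rule sum.cong[OF refl])
    fix j assume "j \<in> {..<m}"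
    then have j: "j < m" by simp
    have ct: "(c (Suc j))^2 + (t (Suc j))^2 = 1" using cs j by auto
    show "(mv (bdim hN hP m) M u (boff hN + 2*j))^2 + (mv (bdim hN hP m) M u (boff hN + 2*j + 1))^2
       = (u (boff hN + 2*j))^2 + (u (boff hN + 2*j + 1))^2"
      using g j rot_id[OF ct, of "u (boff hN + 2*j)" "u (boff hN + 2*j + 1)" 0] unfolding good_def
      by (simp del: add_Suc_right add: Suc_eq_plus1[symmetric])
  qed
  have a: "(if hN then (mv (bdim hN hP m) M u 0)^2 else 0) = (if hN then (u 0)^2 else 0)"
    using g unfolding good_def by auto
  have c: "(if hP then (mv (bdim hN hP m) M u (boff hN + 2*m))^2 else 0) = (if hP then (u (boff hN + 2*m))^2 else 0)"
    using g unfolding good_def by auto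
  show ?thesis
    unfolding sum_split[where g="\<lambda>i. (mv (bdim hN hP m) M u i)^2"] sum_split[where g="\<lambda>i. (u i)^2"]
    using a b c by simp
qed

lemma PB_nonneg: "PB hN m u j \<ge> 0" by (simp add: PB_def)

lemma PB_le:
  assumes pj: "present hN hP m j"
  shows "PB hN m u j \<le> (\<Sum>i<bdim hN hP m. (u i)^2)"
proof -
  have s: "(\<Sum>i<bdim hN hP m. (u i)^2) = (if hN then (u 0)^2 else 0)
      + (\<Sum>j<m. (u (boff hN + 2*j))^2 + (u (boff hN + 2*j + 1))^2)
      + (if hP then (u (boff hN + 2*m))^2 else 0)" by (rule sum_split)
  have nn1: "(if hN then (u 0)^2 else 0) \<ge> 0" by simp
  have nn2: "(\<Sum>j<m. (u (boff hN + 2*j))^2 + (u (boff hN + 2*j + 1))^2) \<ge> 0" by (intro sum_nonneg) simp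
  have nn3: "(if hP then (u (boff hN + 2*m))^2 else 0) \<ge> 0" by simp
  consider "j = 0" | "j = Suc m" | "1 \<le> j \<and> j \<le> m" using pj unfolding present_def by linarith
  then show ?thesis
  proof cases
    case 1
    then have "hN" using pj unfolding present_def by simp
    then show ?thesis using 1 s nn2 nn3 by (simp add: PB_def)
  next
    case 2
    then have "hP" using pj unfolding present_def by simp
    then show ?thesis using 2 s nn1 nn2 by (simp add: PB_def)
  next
    case 3
    define j0 where "j0 = j - 1"
    have j0: "j0 < m" "j = Suc j0" using 3 unfolding j0_def by auto
    have "PB hN m u j = (u (boff hN + 2*j0))^2 + (u (boff hN + 2*j0 + 1))^2"
      unfolding PB_def using j0 by simp
    also have "\<dots> \<le> (\<Sum>j<m. (u (boff hN + 2*j))^2 + (u (boff hN + 2*j + 1))^2)"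
      using j0 by (intro member_le_sum[where f="\<lambda>j. (u (boff hN + 2*j))^2 + (u (boff hN + 2*j + 1))^2"]) auto
    finally show ?thesis using s nn1 nn3 by linarith
  qed
qed

lemma vinner_trans: "vinner n w (mv n (mtrans M) w) = vinner n w (mv n M w)"
proof -
  have "vinner n w (mv n (mtrans M) w) = (\<Sum>i<n. \<Sum>k<n. w i * (M k i * w k))"
    unfolding vinner_def mv_def mtrans_def by (simp add: sum_distrib_left)
  also have "\<dots> = (\<Sum>k<n. \<Sum>i<n. w i * (M k i * w k))" by (rule sum.swap)
  also have "\<dots> = vinner n w (mv n M w)"
    unfolding vinner_def mv_def by (simp add: sum_distrib_left mult_ac)
  finally show ?thesis .
qed


lemma PB_scale: "PB hN m (\<lambda>i. w i / d) j = PB hN m w j / d^2"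
  by (simp add: PB_def power_divide add_divide_distrib)

lemma sum_sq_diff:
  fixes a b :: "nat \<Rightarrow> real"
  shows "(\<Sum>i<n. (a i - g * b i)^2) = (\<Sum>i<n. (a i)^2) - 2*g*(\<Sum>i<n. b i * a i) + g^2 * (\<Sum>i<n. (b i)^2)"
proof -
  have "(\<Sum>i<n. (a i - g * b i)^2) = (\<Sum>i<n. (a i)^2 - 2*g*(b i * a i) + g^2 * (b i)^2)"
    by (rule sum.cong) (simp_all add: power2_eq_square algebra_simps)
  also have "\<dots> = (\<Sum>i<n. (a i)^2) - 2*g*(\<Sum>i<n. b i * a i) + g^2 * (\<Sum>i<n. (b i)^2)"
    by (simp add: sum.distrib sum_subtractf sum_distrib_left)
  finally show ?thesis .
qed

lemma half:
  fixes hN hP :: bool and m l :: nat and c t :: "nat \<Rightarrow> real" and \<gamma> :: real and M :: "nat \<Rightarrow> nat \<Rightarrow> real" and u :: "nat \<Rightarrow> real"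
  defines "n \<equiv> bdim hN hP m"
  assumes g: "good hN hP m c t M" and cs: "\<forall>j\<in>{1..m}. (c j)^2 + (t j)^2 = 1"
    and c0: "c 0 = -1" and cm: "c (Suc m) = 1" and l: "l \<in> {1..m}" and tl: "t l \<noteq> 0"
    and u1: "(\<Sum>i<n. (u i)^2) = 1" and pl: "PB hN m u l > 0"
    and gam: "\<gamma> = vinner n u (mv n M u)"
  defines "wt \<equiv> \<lambda>i. mv n M u i - \<gamma> * u i"
  defines "z \<equiv> \<lambda>i. wt i / vnorm n wt"
  shows "\<gamma>^2 < 1" "(\<Sum>i<n. (z i)^2) = 1"
    "\<And>j. present hN hP m j \<Longrightarrow> PB hN m z j = (1 - 2*\<gamma>*c j + \<gamma>^2) * PB hN m u j / (1 - \<gamma>^2)"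
proof -
  have o: "(\<Sum>i<n. (mv n M u i)^2) = 1" using orth[OF g cs, of u] u1 unfolding n_def by simp
  have S: "(\<Sum>i<n. (wt i)^2) = 1 - \<gamma>^2"
    unfolding wt_def sum_sq_diff o u1 using gam unfolding vinner_def
    by (simp add: power2_eq_square)
  have pl': "present hN hP m l" using l unfolding present_def by auto
  have ct: "(c l)^2 + (t l)^2 = 1" using cs l by auto
  have f: "1 - 2*\<gamma>*c l + \<gamma>^2 = (\<gamma> - c l)^2 + (t l)^2" using ct by (simp add: power2_eq_square algebra_simps)
  have fpos: "1 - 2*\<gamma>*c l + \<gamma>^2 > 0" unfolding f using tl by (simp add: add_nonneg_pos)
  have "PB hN m wt l = (1 - 2*\<gamma>*c l + \<gamma>^2) * PB hN m u l"
    unfolding wt_def n_def by (rule PB_block[OF g cs c0 cm pl'])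
  then have "PB hN m wt l > 0" using fpos pl by simp
  moreover have "PB hN m wt l \<le> (\<Sum>i<n. (wt i)^2)" unfolding n_def by (rule PB_le[OF pl'])
  ultimately have Sp: "1 - \<gamma>^2 > 0" using S by linarith
  then show "\<gamma>^2 < 1" by simp
  have vn: "vnorm n wt = sqrt (1 - \<gamma>^2)" unfolding vnorm_def S ..
  have vn2: "(vnorm n wt)^2 = 1 - \<gamma>^2" unfolding vn using Sp by simp
  have "(\<Sum>i<n. (z i)^2) = (\<Sum>i<n. (wt i)^2) / (vnorm n wt)^2"
    unfolding z_def by (simp add: power_divide sum_divide_distrib)
  then show "(\<Sum>i<n. (z i)^2) = 1" unfolding S vn2 using Sp by simp
  fix j assume pj: "present hN hP m j"
  have "PB hN m z j = PB hN m wt j / (vnorm n wt)^2" unfolding z_def by (rule PB_scale)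
  also have "PB hN m wt j = (1 - 2*\<gamma>*c j + \<gamma>^2) * PB hN m u j"
    unfolding wt_def n_def by (rule PB_block[OF g cs c0 cm pj])
  finally show "PB hN m z j = (1 - 2*\<gamma>*c j + \<gamma>^2) * PB hN m u j / (1 - \<gamma>^2)" unfolding vn2 .
qed

lemma step:
  fixes hN hP :: bool and m l :: nat and c s :: "nat \<Rightarrow> real" and u :: "nat \<Rightarrow> real"
  defines "n \<equiv> bdim hN hP m" and "A \<equiv> blockA hN hP m c s"
  assumes cs: "\<forall>j\<in>{1..m}. (c j)^2 + (s j)^2 = 1"
    and c0: "c 0 = -1" and cm: "c (Suc m) = 1" and l: "l \<in> {1..m}" and sl: "s l \<noteq> 0"
    and u1: "(\<Sum>i<n. (u i)^2) = 1" and pl: "PB hN m u l > 0"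
  shows "\<exists>\<beta>. (vinner n u (mv n A u))^2 < 1 \<and> \<beta>^2 < 1 \<and> (\<Sum>i<n. (aci_step n A u i)^2) = 1
     \<and> (\<forall>j. present hN hP m j \<longrightarrow> PB hN m (aci_step n A u) j = PB hN m u j
          * ((1 - 2*(vinner n u (mv n A u))*c j + (vinner n u (mv n A u))^2)/(1 - (vinner n u (mv n A u))^2))
          * ((1 - 2*\<beta>*c j + \<beta>^2)/(1 - \<beta>^2)))"
proof -
  define \<alpha> where "\<alpha> = vinner n u (mv n A u)"
  define wt where "wt = (\<lambda>i. mv n A u i - \<alpha> * u i)"
  define w where "w = (\<lambda>i. wt i / vnorm n wt)"
  define \<beta> where "\<beta> = vinner n w (mv n A w)"
  define vt where "vt = (\<lambda>i. mv n (mtrans A) w i - \<beta> * w i)"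
  have st: "aci_step n A u = (\<lambda>i. vt i / vnorm n vt)"
    unfolding aci_step_def Let_def vt_def \<beta>_def w_def wt_def \<alpha>_def ..
  have gA: "good hN hP m c s A" unfolding A_def by (rule good_A)
  have gT: "good hN hP m c (\<lambda>j. - s j) (mtrans A)" unfolding A_def by (rule good_T)
  have csT: "\<forall>j\<in>{1..m}. (c j)^2 + ((\<lambda>j. - s j) j)^2 = 1" using cs by simp
  have H1: "\<alpha>^2 < 1" "(\<Sum>i<n. (w i)^2) = 1"
     "\<And>j. present hN hP m j \<Longrightarrow> PB hN m w j = (1 - 2*\<alpha>*c j + \<alpha>^2) * PB hN m u j / (1 - \<alpha>^2)"
    using half[OF gA cs c0 cm l sl u1[unfolded n_def] pl \<alpha>_def[unfolded n_def]] unfolding w_def wt_def n_def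
    by auto
  have pl': "present hN hP m l" using l unfolding present_def by auto
  have ct: "(c l)^2 + (s l)^2 = 1" using cs l by auto
  have f: "1 - 2*\<alpha>*c l + \<alpha>^2 = (\<alpha> - c l)^2 + (s l)^2" using ct by (simp add: power2_eq_square algebra_simps)
  have fpos: "1 - 2*\<alpha>*c l + \<alpha>^2 > 0" unfolding f using sl by (simp add: add_nonneg_pos)
  have a1: "1 - \<alpha>^2 > 0" using H1(1) by simp
  have wl: "PB hN m w l > 0" unfolding H1(3)[OF pl'] using fpos pl a1 by simp
  have \<beta>': "\<beta> = vinner n w (mv n (mtrans A) w)" unfolding \<beta>_def vinner_trans ..
  have sT: "(\<lambda>j. - s j) l \<noteq> 0" using sl by simp
  have H2: "\<beta>^2 < 1" "(\<Sum>i<n. (aci_step n A u i)^2) = 1"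
     "\<And>j. present hN hP m j \<Longrightarrow> PB hN m (aci_step n A u) j = (1 - 2*\<beta>*c j + \<beta>^2) * PB hN m w j / (1 - \<beta>^2)"
    using half[OF gT csT c0 cm l sT H1(2)[unfolded n_def] wl \<beta>'[unfolded n_def]] unfolding st unfolding vt_def n_def
    by auto
  show ?thesis
  proof (intro exI[of _ \<beta>] conjI allI impI)
    show "(vinner n u (mv n A u))^2 < 1" using H1(1) unfolding \<alpha>_def .
    show "\<beta>^2 < 1" by (rule H2(1))
    show "(\<Sum>i<n. (aci_step n A u i)^2) = 1" by (rule H2(2))
    fix j assume pj: "present hN hP m j"
    show "PB hN m (aci_step n A u) j = PB hN m u j
          * ((1 - 2*(vinner n u (mv n A u))*c j + (vinner n u (mv n A u))^2)/(1 - (vinner n u (mv n A u))^2))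
          * ((1 - 2*\<beta>*c j + \<beta>^2)/(1 - \<beta>^2))"
      unfolding H2(3)[OF pj] H1(3)[OF pj] \<alpha>_def[symmetric] by simp
  qed
qed


lemma bnz:
  assumes "block_nz hN hP m v j"
  shows "present hN hP m j \<and> PB hN m v j > 0"
proof -
  consider "j = 0" | "j = Suc m" | "1 \<le> j \<and> j \<le> m" | "j > Suc m" by linarith
  then show ?thesis
  proof cases
    case 1 then show ?thesis using assms by (simp add: block_nz_def present_def PB_def)
  next
    case 2 then show ?thesis using assms by (simp add: block_nz_def present_def PB_def)
  next
    case 3
    then have p: "present hN hP m j" by (simp add: present_def)
    have nz: "v (boff hN + 2 * (j - 1)) \<noteq> 0 \<or> v (boff hN + 2 * (j - 1) + 1) \<noteq> 0"
      using assms 3 by (simp add: block_nz_def)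
    have "PB hN m v j = (v (boff hN + 2 * (j - 1)))^2 + (v (boff hN + 2 * (j - 1) + 1))^2"
      using 3 by (simp add: PB_def)
    moreover have "(v (boff hN + 2 * (j - 1)))^2 + (v (boff hN + 2 * (j - 1) + 1))^2 > 0"
      using nz by (metis add_pos_nonneg add_nonneg_pos zero_le_power2 zero_less_power2)
    ultimately show ?thesis using p by simp
  next
    case 4 then show ?thesis using assms by (simp add: block_nz_def)
  qed
qed

lemma cbound:
  fixes c s :: "nat \<Rightarrow> real"
  assumes cs: "\<forall>j\<in>{1..m}. (c j)^2 + (s j)^2 = 1" and c0: "c 0 = -1" and cm: "c (Suc m) = 1"
    and p: "present hN hP m j"
  shows "(c j)^2 \<le> 1" "-1 \<le> c j" "c j \<le> 1"
proof -
  have "(c j)^2 \<le> 1"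
  proof (cases "j = 0 \<or> j = Suc m")
    case True then show ?thesis using c0 cm by auto
  next
    case False
    then have "j \<in> {1..m}" using p unfolding present_def by auto
    then have "(c j)^2 + (s j)^2 = 1" using cs by auto
    then show ?thesis by (smt (verit) zero_le_power2)
  qed
  then show "(c j)^2 \<le> 1" "-1 \<le> c j" "c j \<le> 1" using abs_square_le_1 by (auto simp: abs_le_iff)
qed

lemma fpos:
  fixes c g :: real
  assumes "c^2 \<le> 1" "g^2 < 1"
  shows "1 - 2*g*c + g^2 > 0"
proof -
  have ac: "\<bar>c\<bar> \<le> 1" using assms(1) by (simp add: abs_square_le_1)
  have ag: "\<bar>g\<bar> < 1" using assms(2) by (simp add: abs_square_less_1)
  have "\<bar>g*c\<bar> \<le> \<bar>g\<bar>" using ac by (simp add: abs_mult mult_left_le)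
  then have "g*c \<le> \<bar>g\<bar>" by linarith
  moreover have "(1 - \<bar>g\<bar>)^2 > 0" using ag by simp
  moreover have "(1 - \<bar>g\<bar>)^2 = 1 - 2*\<bar>g\<bar> + g^2" by (simp add: power2_eq_square algebra_simps)
  ultimately show ?thesis by linarith
qed

lemma mvI:
  fixes M :: "nat \<Rightarrow> nat \<Rightarrow> real"
  assumes "i < n"
  shows "mv n (\<lambda>i k. M i k - a * (if i = k then 1 else 0)) x i = mv n M x i - a * x i"
proof -
  have e: "\<And>k. (M i k - a*(if i=k then 1 else 0)) * x k = M i k * x k - (if k = i then a * x i else 0)"
    by (auto simp: algebra_simps)
  show ?thesis using assms by (simp add: mv_def e sum_subtractf)
qed

lemma vinner_alt: "vinner n v (mv n M v) = (\<Sum>i<n. v i * (\<Sum>k<n. M i k * v k))"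
  unfolding vinner_def mv_def by (rule sum.cong) auto

lemma vnorm1: "vnorm n x = 1 \<longleftrightarrow> (\<Sum>i<n. (x i)^2) = 1"
proof -
  have "(\<Sum>i<n. (x i)^2) \<ge> 0" by (intro sum_nonneg) simp
  then show ?thesis unfolding vnorm_def by (metis real_sqrt_eq_1_iff)
qed


lemma G_deriv:
  fixes a b lam mu t :: real
  assumes "0\<le>a" "a\<le>1" "0\<le>b" "b\<le>1" "-1 < t" "t < 1"
  shows "((\<lambda>t. lam * ln (1 + a*t) + mu * ln (1 - b*t) - (ln (1 - t) + ln (1 + t)) / 2)
     has_real_derivative (lam*a/(1+a*t) - mu*b/(1-b*t) + t/(1 - t^2))) (at t)"
proof -
  have p1: "1 + a*t > 0"
  proof (cases "t \<ge> 0")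
    case True then show ?thesis using assms by (simp add: add_pos_nonneg)
  next
    case False
    have "a*(-t) \<le> 1*(-t)" using assms False by (intro mult_right_mono) auto
    then show ?thesis using assms by linarith
  qed
  have p2: "1 - b*t > 0"
  proof (cases "t \<le> 0")
    case True
    have "b*t \<le> 0" using True assms by (simp add: mult_nonneg_nonpos)
    then show ?thesis by linarith
  next
    case False
    have "b*t \<le> 1*t" using assms False by (intro mult_right_mono) auto
    then show ?thesis using assms by linarith
  qed
  have p3: "1 - t > 0" "1 + t > 0" using assms by auto
  have D: "((\<lambda>t. lam * ln (1 + a*t) + mu * ln (1 - b*t) - (ln (1 - t) + ln (1 + t)) / 2)
     has_real_derivative (lam * (1/(1+a*t) * (0 + a*1)) + mu * (1/(1-b*t) * (0 - b*1))
        - (1/(1-t)*(0-1) + 1/(1+t)*(0+1))/2)) (at t)"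
  proof -
    have d1: "((\<lambda>z. ln (1 + a*z)) has_real_derivative (1/(1+a*t) * (0 + a*1))) (at t)"
      by (rule DERIV_chain2[where g="\<lambda>z. 1 + a*z", OF DERIV_ln_divide[OF p1]]) (auto intro!: derivative_eq_intros)
    have d2: "((\<lambda>z. ln (1 - b*z)) has_real_derivative (1/(1-b*t) * (0 - b*1))) (at t)"
      by (rule DERIV_chain2[where g="\<lambda>z. 1 - b*z", OF DERIV_ln_divide[OF p2]]) (auto intro!: derivative_eq_intros)
    have d3: "((\<lambda>z. ln (1 - z)) has_real_derivative (1/(1-t) * (0 - 1))) (at t)"
      by (rule DERIV_chain2[where g="\<lambda>z. 1 - z", OF DERIV_ln_divide[OF p3(1)]]) (intro derivative_intros)
    have d4: "((\<lambda>z. ln (1 + z)) has_real_derivative (1/(1+t) * (0 + 1))) (at t)"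
      by (rule DERIV_chain2[where g="\<lambda>z. 1 + z", OF DERIV_ln_divide[OF p3(2)]]) (intro derivative_intros)
    show ?thesis
      by (rule DERIV_diff[OF DERIV_add[OF DERIV_cmult[OF d1] DERIV_cmult[OF d2]] DERIV_cdivide[OF DERIV_add[OF d3 d4]]])
  qed
  have E: "lam * (1/(1+a*t) * (0 + a*1)) + mu * (1/(1-b*t) * (0 - b*1))
        - (1/(1-t)*(0-1) + 1/(1+t)*(0+1))/2 = lam*a/(1+a*t) - mu*b/(1-b*t) + t/(1 - t^2)"
  proof -
    have q: "(1-t)*(1+t) > 0" by (rule mult_pos_pos[OF p3(1) p3(2)])
    have p4a: "1 - t*t > 0" using q by (simp add: algebra_simps)
    have "2 - t*(t*2) = 2*(1 - t*t)" by (simp add: algebra_simps)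
    then have p4: "1 - t*t > 0" "2 - t*(t*2) > 0" using p4a by simp_all
    show ?thesis
    using p1 p2 p3 p4 by (simp add: field_simps power2_eq_square)
  qed
  show ?thesis using D unfolding E .
qed

lemma G_sign:
  fixes a b lam mu t :: real
  assumes "0\<le>a" "a\<le>1" "0\<le>b" "b\<le>1" "\<not>(a=1 \<and> b=1)" "lam + mu = 1" "lam*a = mu*b"
     "-1 < t" "t < 1"
  shows "lam*a/(1+a*t) - mu*b/(1-b*t) + t/(1 - t^2) = t * (1/(1-t^2) - a*b/((1+a*t)*(1-b*t)))"
    and "1 - a*b + (a-b)*t > 0"
proof -
  have p1: "1 + a*t > 0"
  proof (cases "t \<ge> 0")
    case True then show ?thesis using assms by (simp add: add_pos_nonneg)
  next
    case False
    have "a*(-t) \<le> 1*(-t)" using assms False by (intro mult_right_mono) auto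
    then show ?thesis using assms by linarith
  qed
  have p2: "1 - b*t > 0"
  proof (cases "t \<le> 0")
    case True
    have "b*t \<le> 0" using True assms by (simp add: mult_nonneg_nonpos)
    then show ?thesis by linarith
  next
    case False
    have "b*t \<le> 1*t" using assms False by (intro mult_right_mono) auto
    then show ?thesis using assms by linarith
  qed
  have "lam*a*(a+b) = (lam*a)*a + lam*a*b" by (simp add: algebra_simps)
  also have "\<dots> = (mu*b)*a + lam*a*b" using assms(7) by simp
  also have "\<dots> = (lam+mu)*a*b" by (simp add: algebra_simps)
  finally have k: "lam*a*(a+b) = a*b" using assms(6) by simp
  have "lam*a/(1+a*t) - mu*b/(1-b*t) = lam*a * ((1-b*t) - (1+a*t))/((1+a*t)*(1-b*t))"
    using p1 p2 assms by (simp add: field_simps)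
  also have "\<dots> = - t * (lam*a*(a+b))/((1+a*t)*(1-b*t))" by (simp add: algebra_simps)
  also have "\<dots> = - t * (a*b)/((1+a*t)*(1-b*t))" using k by simp
  finally show "lam*a/(1+a*t) - mu*b/(1-b*t) + t/(1 - t^2) = t * (1/(1-t^2) - a*b/((1+a*t)*(1-b*t)))"
    by (simp add: field_simps)
  have q1: "(1+a)*(1-b) \<ge> 0" "(1-a)*(1+b) \<ge> 0" using assms by auto
  have q2: "(1+a)*(1-b) > 0 \<or> (1-a)*(1+b) > 0" using assms by auto
  have eq: "1 - a*b + (a-b)*t = (1+t)/2*((1+a)*(1-b)) + (1-t)/2*((1-a)*(1+b))"
    by (simp add: field_simps)
  have "(1+t)/2*((1+a)*(1-b)) + (1-t)/2*((1-a)*(1+b)) > 0"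
    using q2
  proof
    assume h: "(1+a)*(1-b) > 0"
    have "(1+t)/2 > 0" using assms by simp
    then have "(1+t)/2*((1+a)*(1-b)) > 0" using h by (rule mult_pos_pos)
    moreover have "(1-t)/2*((1-a)*(1+b)) \<ge> 0" using q1 assms by (intro mult_nonneg_nonneg) auto
    ultimately show ?thesis by linarith
  next
    assume h: "(1-a)*(1+b) > 0"
    have "(1-t)/2 > 0" using assms by simp
    then have "(1-t)/2*((1-a)*(1+b)) > 0" using h by (rule mult_pos_pos)
    moreover have "(1+t)/2*((1+a)*(1-b)) \<ge> 0" using q1 assms by (intro mult_nonneg_nonneg) auto
    ultimately show ?thesis by linarith
  qed
  then show "1 - a*b + (a-b)*t > 0" using eq by simp
qed

lemma G_deriv_pos:
  fixes a b lam mu t :: real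
  assumes "0\<le>a" "a\<le>1" "0\<le>b" "b\<le>1" "\<not>(a=1 \<and> b=1)" "lam + mu = 1" "lam*a = mu*b"
     "-1 < t" "t < 1"
  shows "(1/(1-t^2) - a*b/((1+a*t)*(1-b*t))) > 0"
proof -
  have p1: "1 + a*t > 0"
  proof (cases "t \<ge> 0")
    case True then show ?thesis using assms by (simp add: add_pos_nonneg)
  next
    case False
    have "a*(-t) \<le> 1*(-t)" using assms False by (intro mult_right_mono) auto
    then show ?thesis using assms by linarith
  qed
  have p2: "1 - b*t > 0"
  proof (cases "t \<le> 0")
    case True
    have "b*t \<le> 0" using True assms by (simp add: mult_nonneg_nonpos)
    then show ?thesis by linarith
  next
    case False
    have "b*t \<le> 1*t" using assms False by (intro mult_right_mono) auto
    then show ?thesis using assms by linarith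
  qed
  have p3: "1 - t^2 > 0" using assms by (simp add: abs_less_iff power2_less_1_iff  abs_square_less_1)
  have s: "1 - a*b + (a-b)*t > 0" using G_sign(2)[OF assms] .
  have "a*b*(1-t^2) < (1+a*t)*(1-b*t)" using s by (simp add: algebra_simps power2_eq_square)
  moreover have aux: "\<And>D E x::real. D>0 \<Longrightarrow> E>0 \<Longrightarrow> x*E < D \<Longrightarrow> x/D < 1/E"
    by (simp add: field_simps)
  ultimately have "a*b/((1+a*t)*(1-b*t)) < 1/(1-t^2)" using p1 p2 p3
    by (intro aux) auto
  then show ?thesis by linarith
qed


definition GG :: "real \<Rightarrow> real \<Rightarrow> real \<Rightarrow> real \<Rightarrow> real \<Rightarrow> real" where
  "GG a b lam mu t = lam * ln (1 + a*t) + mu * ln (1 - b*t) - (ln (1 - t) + ln (1 + t)) / 2"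

lemma GG_deriv_ex:
  fixes a b lam mu :: real
  assumes "0\<le>a" "a\<le>1" "0\<le>b" "b\<le>1" "\<not>(a=1 \<and> b=1)" "lam + mu = 1" "lam*a = mu*b"
     "-1 < t" "t < 1"
  shows "\<exists>y. (GG a b lam mu has_real_derivative y) (at t) \<and> (t > 0 \<longrightarrow> y > 0) \<and> (t < 0 \<longrightarrow> y < 0)"
proof -
  have d: "(GG a b lam mu has_real_derivative (lam*a/(1+a*t) - mu*b/(1-b*t) + t/(1 - t^2))) (at t)"
    unfolding GG_def[abs_def] using G_deriv[OF assms(1-4) assms(8,9)] by simp
  have e: "lam*a/(1+a*t) - mu*b/(1-b*t) + t/(1 - t^2) = t * (1/(1-t^2) - a*b/((1+a*t)*(1-b*t)))"
    using G_sign(1)[OF assms] .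
  have q: "(1/(1-t^2) - a*b/((1+a*t)*(1-b*t))) > 0" using G_deriv_pos[OF assms] .
  show ?thesis
    using d q unfolding e by (intro exI[of _ "t * (1/(1-t^2) - a*b/((1+a*t)*(1-b*t)))"])
      (auto simp: mult_pos_pos mult_neg_pos)
qed

lemma GG_cont:
  fixes a b lam mu :: real
  assumes "0\<le>a" "a\<le>1" "0\<le>b" "b\<le>1" "\<not>(a=1 \<and> b=1)" "lam + mu = 1" "lam*a = mu*b"
     "-1 < x" "y < 1"
  shows "continuous_on {x..y} (GG a b lam mu)"
proof (intro continuous_at_imp_continuous_on ballI)
  fix z assume "z \<in> {x..y}"
  then have "-1 < z" "z < 1" using assms by auto
  then obtain d where "(GG a b lam mu has_real_derivative d) (at z)"
    using GG_deriv_ex[OF assms(1-7)] by blast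
  then show "isCont (GG a b lam mu) z" by (rule DERIV_isCont)
qed

lemma GG_mono:
  fixes a b lam mu :: real
  assumes "0\<le>a" "a\<le>1" "0\<le>b" "b\<le>1" "\<not>(a=1 \<and> b=1)" "lam + mu = 1" "lam*a = mu*b"
  shows "\<And>x y. 0 \<le> x \<Longrightarrow> x < y \<Longrightarrow> y < 1 \<Longrightarrow> GG a b lam mu x < GG a b lam mu y"
    and "\<And>x y. -1 < x \<Longrightarrow> x < y \<Longrightarrow> y \<le> 0 \<Longrightarrow> GG a b lam mu x > GG a b lam mu y"
proof -
  fix x y :: real assume h: "0 \<le> x" "x < y" "y < 1"
  show "GG a b lam mu x < GG a b lam mu y"
  proof (rule DERIV_pos_imp_increasing_open[OF h(2)])
    fix z assume "x < z" "z < y"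
    then show "\<exists>d. (GG a b lam mu has_real_derivative d) (at z) \<and> d > 0"
      using GG_deriv_ex[OF assms, of z] h by auto
  next
    show "continuous_on {x..y} (GG a b lam mu)" using GG_cont[OF assms] h by simp
  qed
next
  fix x y :: real assume h: "-1 < x" "x < y" "y \<le> 0"
  show "GG a b lam mu x > GG a b lam mu y"
  proof (rule DERIV_neg_imp_decreasing_open[OF h(2)])
    fix z assume "x < z" "z < y"
    then show "\<exists>d. (GG a b lam mu has_real_derivative d) (at z) \<and> d < 0"
      using GG_deriv_ex[OF assms, of z] h by auto
  next
    show "continuous_on {x..y} (GG a b lam mu)" using GG_cont[OF assms] h by simp
  qed
qed

lemma GG_0: "GG a b lam mu 0 = 0" by (simp add: GG_def)

lemma GG_F:
  fixes a b lam mu g :: real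
  assumes "0\<le>a" "a\<le>1" "0\<le>b" "b\<le>1" "lam + mu = 1" "g^2 < 1"
  shows "lam * ln ((1 + 2*a*g + g^2)/(1 - g^2)) + mu * ln ((1 - 2*b*g + g^2)/(1 - g^2))
         = GG a b lam mu (2*g/(1+g^2))"
proof -
  define t where "t = 2*g/(1+g^2)"
  have g1: "1 + g^2 > 0" by (simp add: add_pos_nonneg)
  have g2: "1 - g^2 > 0" using assms by simp
  have ag: "\<bar>g\<bar> < 1" using assms by (simp add: abs_square_less_1)
  have "(1 - \<bar>g\<bar>)^2 > 0" using ag by simp
  then have "2*\<bar>g\<bar> < 1 + g^2" by (simp add: power2_eq_square algebra_simps)
  then have tl: "\<bar>t\<bar> < 1" unfolding t_def using g1 by (simp add: abs_mult field_simps)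
  have p1: "1 + a*t > 0"
  proof (cases "t \<ge> 0")
    case True then show ?thesis using assms by (simp add: add_pos_nonneg)
  next
    case False
    have "a*(-t) \<le> 1*(-t)" using assms False by (intro mult_right_mono) auto
    then show ?thesis using assms tl by linarith
  qed
  have p2: "1 - b*t > 0"
  proof (cases "t \<le> 0")
    case True
    have "b*t \<le> 0" using True assms by (simp add: mult_nonneg_nonpos)
    then show ?thesis by linarith
  next
    case False
    have "b*t \<le> 1*t" using assms False by (intro mult_right_mono) auto
    then show ?thesis using tl by linarith
  qed
  have "(1 + a*t)*(1+g^2) = 1 + 2*a*g + g^2" unfolding t_def using g1 by (simp add: field_simps)
  then have e1: "(1 + 2*a*g + g^2)/(1 - g^2) = (1 + a*t) * ((1+g^2)/(1-g^2))"
    by (simp only: times_divide_eq_right)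
  have "(1 - b*t)*(1+g^2) = 1 - 2*b*g + g^2" unfolding t_def using g1 by (simp add: field_simps)
  then have e2: "(1 - 2*b*g + g^2)/(1 - g^2) = (1 - b*t) * ((1+g^2)/(1-g^2))"
    by (simp only: times_divide_eq_right)
  have q: "(1+g^2)/(1-g^2) > 0" using g1 g2 by simp
  have m1: "1 - t > 0" "1 + t > 0" using tl by auto
  have "(1 - t) * (1 + t) = ((1-g^2)/(1+g^2))^2"
    unfolding t_def using g1 g2 by (simp add: field_simps power2_eq_square)
  note eqq = this
  have "ln (1 - t) + ln (1 + t) = ln ((1-t)*(1+t))" using m1 by (simp add: ln_mult)
  also have "\<dots> = ln (((1-g^2)/(1+g^2))^2)" using eqq by simp
  also have "\<dots> = 2 * ln ((1-g^2)/(1+g^2))" using g1 g2 by (simp add: ln_realpow)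
  finally have "ln (1 - t) + ln (1 + t) = 2 * ln ((1-g^2)/(1+g^2))" .
  also have "ln ((1-g^2)/(1+g^2)) = - ln ((1+g^2)/(1-g^2))"
    using g1 g2 by (simp add: ln_div)
  finally have L: "(ln (1 - t) + ln (1 + t))/2 = - ln ((1+g^2)/(1-g^2))" by simp
  have "lam * ln ((1 + 2*a*g + g^2)/(1 - g^2)) + mu * ln ((1 - 2*b*g + g^2)/(1 - g^2))
     = lam * (ln (1 + a*t) + ln ((1+g^2)/(1-g^2))) + mu * (ln (1 - b*t) + ln ((1+g^2)/(1-g^2)))"
    unfolding e1 e2 by (simp only: ln_mult_pos[OF p1 q] ln_mult_pos[OF p2 q])
  also have "\<dots> = lam * ln (1 + a*t) + mu * ln (1 - b*t) + (lam+mu) * ln ((1+g^2)/(1-g^2))"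
    by (simp add: algebra_simps)
  also have "\<dots> = GG a b lam mu t" unfolding GG_def L using assms(5) by simp
  finally show ?thesis unfolding t_def .
qed

lemma tb_lem: fixes g :: real assumes that: "g^2 < 1" shows "\<bar>2*g/(1+g^2)\<bar> < 1 \<and> \<bar>g\<bar> \<le> \<bar>2*g/(1+g^2)\<bar>"
proof -
  have g1: "1 + g^2 > 0" by (simp add: add_pos_nonneg)
  have ag: "\<bar>g\<bar> < 1" using that by (simp add: abs_square_less_1)
  have "(1 - \<bar>g\<bar>)^2 > 0" using ag by simp
  then have "2*\<bar>g\<bar> < 1 + g^2" by (simp add: power2_eq_square algebra_simps)
  moreover have "\<bar>g\<bar> * (1+g^2) \<le> 2 * \<bar>g\<bar>"
proof -
    have "\<bar>g\<bar> * (1+g^2) \<le> \<bar>g\<bar> * 2" using that by (intro mult_left_mono) auto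
    then show ?thesis by simp
  qed
  ultimately show ?thesis using g1 by (simp add: abs_mult field_simps)
qed

lemma Gnn_lem:
fixes a b lam mu :: real
assumes "0\<le>a" "a\<le>1" "0\<le>b" "b\<le>1" "\<not>(a=1 \<and> b=1)" "lam + mu = 1" "lam*a = mu*b"
and that: "\<bar>t\<bar> < 1" shows "GG a b lam mu t \<ge> 0"
proof (cases "t = 0")
  case True then show ?thesis by (simp add: GG_0)
next
  case False
  show ?thesis
  proof (cases "t > 0")
    case True
    then show ?thesis using GG_mono(1)[OF assms(1-7), of 0 t] that by (simp add: GG_0)
  next
    case f2: False
    then show ?thesis using GG_mono(2)[OF assms(1-7), of t 0] that False by (simp add: GG_0)
  qed
qed

lemma F_props:
  fixes a b lam mu :: real
  assumes "0\<le>a" "a\<le>1" "0\<le>b" "b\<le>1" "\<not>(a=1 \<and> b=1)" "lam + mu = 1" "lam*a = mu*b"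
  defines "F \<equiv> \<lambda>g. lam * ln ((1 + 2*a*g + g^2)/(1 - g^2)) + mu * ln ((1 - 2*b*g + g^2)/(1 - g^2))"
  shows "\<And>g. g^2 < 1 \<Longrightarrow> F g \<ge> 0"
    and "\<And>\<delta>. \<delta> > 0 \<Longrightarrow> \<exists>\<epsilon>>0. \<forall>g. g^2 < 1 \<and> \<delta> \<le> \<bar>g\<bar> \<longrightarrow> \<epsilon> \<le> F g"
proof -
  fix g :: real assume g: "g^2 < 1"
  show "F g \<ge> 0" unfolding F_def GG_F[OF assms(1-4,6) g] using Gnn_lem[OF assms(1-7)] tb_lem[OF g] by blast
next
  fix \<delta> :: real assume d: "\<delta> > 0"
  define d' where "d' = min \<delta> (1/2)"
  have d'p: "0 < d'" "d' < 1" "d' \<le> \<delta>" using d unfolding d'_def by auto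
  have e1: "GG a b lam mu d' > 0" using GG_mono(1)[OF assms(1-7), of 0 d'] d'p by (simp add: GG_0)
  have e2: "GG a b lam mu (-d') > 0" using GG_mono(2)[OF assms(1-7), of "-d'" 0] d'p by (simp add: GG_0)
  show "\<exists>\<epsilon>>0. \<forall>g. g^2 < 1 \<and> \<delta> \<le> \<bar>g\<bar> \<longrightarrow> \<epsilon> \<le> F g"
  proof (intro exI[of _ "min (GG a b lam mu d') (GG a b lam mu (-d'))"] conjI allI impI)
    show "0 < min (GG a b lam mu d') (GG a b lam mu (-d'))" using e1 e2 by simp
    fix g assume h: "g^2 < 1 \<and> \<delta> \<le> \<bar>g\<bar>"
    define t where "t = 2*g/(1+g^2)"
    have ht: "\<bar>t\<bar> < 1" "d' \<le> \<bar>t\<bar>" using tb_lem[of g] h d'p unfolding t_def by auto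
    have "F g = GG a b lam mu t" unfolding F_def t_def using GG_F[OF assms(1-4,6)] h by blast
    moreover have "min (GG a b lam mu d') (GG a b lam mu (-d')) \<le> GG a b lam mu t"
    proof (cases "t > 0")
      case True
      then have "d' \<le> t" using ht by simp
      then have "GG a b lam mu d' \<le> GG a b lam mu t"
        using GG_mono(1)[OF assms(1-7), of d' t] d'p ht by (cases "d' = t") auto
      then show ?thesis by simp
    next
      case False
      then have "t \<le> -d'" using ht by simp
      then have "GG a b lam mu (-d') \<le> GG a b lam mu t"
        using GG_mono(2)[OF assms(1-7), of t "-d'"] d'p ht by (cases "t = -d'") auto
      then show ?thesis by simp
    qed
    ultimately show "min (GG a b lam mu d') (GG a b lam mu (-d')) \<le> F g" by simp
  qed
qed


lemma lnprod3: "(P::real) > 0 \<Longrightarrow> Fa > 0 \<Longrightarrow> Fb > 0 \<Longrightarrow> ln (P*Fa*Fb) = ln P + ln Fa + ln Fb"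
  by (simp add: ln_mult_pos)

lemma ffpos: "(c::real)^2 \<le> 1 \<Longrightarrow> g^2 < 1 \<Longrightarrow> (1 - 2*g*c + g^2)/(1 - g^2) > 0"
  using fpos[of c g] by simp

lemma choose_xy:
  fixes c s :: "nat \<Rightarrow> real"
  assumes cs: "\<forall>j\<in>{1..m}. (c j)^2 + (s j)^2 = 1 \<and> s j \<noteq> 0"
    and l: "l \<in> {1..m}" and pl: "present hN hP m l" and pj: "present hN hP m j"
    and Pl: "PB hN m v l > 0" and Pj: "PB hN m v j > 0" and clj: "c l * c j \<le> 0"
  shows "\<exists>x y. present hN hP m x \<and> present hN hP m y \<and> PB hN m v x > 0 \<and> PB hN m v y > 0
     \<and> c x \<le> 0 \<and> 0 \<le> c y \<and> \<not> (c x = -1 \<and> c y = 1)"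
proof -
  have "(c l)^2 + (s l)^2 = 1" "s l \<noteq> 0" using cs l by auto
  then have cl2: "(c l)^2 < 1" by (smt (verit) zero_less_power2)
  then have cl: "c l \<noteq> -1" "c l \<noteq> 1" by auto
  consider "c l < 0" | "c l > 0" | "c l = 0" by linarith
  then show ?thesis
  proof cases
    case 1
    then have "c j \<ge> 0" using clj by (smt (verit) mult_neg_neg)
    then show ?thesis using 1 cl pl pj Pl Pj by (intro exI[of _ l] exI[of _ j]) auto
  next
    case 2
    then have "c j \<le> 0" using clj by (smt (verit) mult_pos_pos)
    then show ?thesis using 2 cl pl pj Pl Pj by (intro exI[of _ j] exI[of _ l]) auto
  next
    case 3
    then show ?thesis using pl Pl by (intro exI[of _ l] exI[of _ l]) auto
  qed
qed


lemma dynamics: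
  fixes hN hP :: bool and m l j :: nat and c s v0 :: "nat \<Rightarrow> real"
  defines "n \<equiv> bdim hN hP m" and "A \<equiv> blockA hN hP m c s"
  assumes cs: "\<forall>j\<in>{1..m}. (c j)^2 + (s j)^2 = 1 \<and> s j \<noteq> 0"
    and c0: "c 0 = -1" and cm: "c (Suc m) = 1"
    and v1: "(\<Sum>i<n. (v0 i)^2) = 1"
    and l: "l \<in> {1..m}" and bl: "block_nz hN hP m v0 l"
    and bj: "block_nz hN hP m v0 j" and clj: "c l * c j \<le> 0"
  shows "(\<lambda>k. vinner n (aci_seq n A v0 k) (mv n A (aci_seq n A v0 k))) \<longlonglongrightarrow> 0"
    and "\<And>k. (\<Sum>i<n. (aci_seq n A v0 k i)^2) = 1"
proof -
  have cs': "\<forall>j\<in>{1..m}. (c j)^2 + (s j)^2 = 1" using cs by auto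
  have sl: "s l \<noteq> 0" using cs l by auto
  have pl: "present hN hP m l" "PB hN m v0 l > 0" using bnz[OF bl] by auto
  have pj: "present hN hP m j" "PB hN m v0 j > 0" using bnz[OF bj] by auto
  obtain x y where px: "present hN hP m x" and py: "present hN hP m y"
    and Px: "PB hN m v0 x > 0" and Py: "PB hN m v0 y > 0"
    and cx: "c x \<le> 0" and cy: "0 \<le> c y" and ne: "\<not> (c x = -1 \<and> c y = 1)"
    using choose_xy[OF cs l pl(1) pj(1) pl(2) pj(2) clj] by blast
  define V where "V k = aci_seq n A v0 k" for k
  have V0: "V 0 = v0" unfolding V_def aci_seq_def by simp
  have VS: "V (Suc k) = aci_step n A (V k)" for k unfolding V_def aci_seq_def by simp
  define al where "al k = vinner n (V k) (mv n A (V k))" for k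
  have STEP: "\<exists>\<beta>. (al k)^2 < 1 \<and> \<beta>^2 < 1 \<and> (\<Sum>i<n. (V (Suc k) i)^2) = 1
     \<and> (\<forall>j. present hN hP m j \<longrightarrow> PB hN m (V (Suc k)) j = PB hN m (V k) j
          * ((1 - 2*(al k)*c j + (al k)^2)/(1 - (al k)^2))
          * ((1 - 2*\<beta>*c j + \<beta>^2)/(1 - \<beta>^2)))"
    if "(\<Sum>i<n. (V k i)^2) = 1" "PB hN m (V k) l > 0" for k
    using step[OF cs' c0 cm l sl that[unfolded n_def]] unfolding VS al_def n_def A_def by blast
  have cb: "\<And>j. present hN hP m j \<Longrightarrow> (c j)^2 \<le> 1" using cbound[OF cs' c0 cm] by blast
  have INV: "(\<Sum>i<n. (V k i)^2) = 1 \<and> PB hN m (V k) l > 0" for k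
  proof (induction k)
    case 0 then show ?case using v1 pl V0 by simp
  next
    case (Suc k)
    then obtain \<beta> where H: "(al k)^2 < 1" "\<beta>^2 < 1" "(\<Sum>i<n. (V (Suc k) i)^2) = 1"
      "PB hN m (V (Suc k)) l = PB hN m (V k) l
          * ((1 - 2*(al k)*c l + (al k)^2)/(1 - (al k)^2))
          * ((1 - 2*\<beta>*c l + \<beta>^2)/(1 - \<beta>^2))"
      using STEP[of k] pl(1) by blast
    have "PB hN m (V (Suc k)) l > 0" unfolding H(4)
      using Suc ffpos[OF cb[OF pl(1)] H(1)] ffpos[OF cb[OF pl(1)] H(2)] by (metis mult_pos_pos)
    then show ?case using H(3) by simp
  qed
  have POS: "PB hN m (V k) q > 0" if pq: "present hN hP m q" "PB hN m v0 q > 0" for k q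
  proof (induction k)
    case 0 then show ?case using pq V0 by simp
  next
    case (Suc k)
    obtain \<beta> where H: "(al k)^2 < 1" "\<beta>^2 < 1"
      "PB hN m (V (Suc k)) q = PB hN m (V k) q
          * ((1 - 2*(al k)*c q + (al k)^2)/(1 - (al k)^2))
          * ((1 - 2*\<beta>*c q + \<beta>^2)/(1 - \<beta>^2))"
      using STEP[of k] INV[of k] pq(1) by blast
    show ?case unfolding H(3)
      using Suc ffpos[OF cb[OF pq(1)] H(1)] ffpos[OF cb[OF pq(1)] H(2)] by (metis mult_pos_pos)
  qed
  define a where "a = - c x"
  define b where "b = c y"
  have ab: "0 \<le> a" "a \<le> 1" "0 \<le> b" "b \<le> 1" "\<not>(a=1 \<and> b=1)"
    using cx cy ne cbound(2)[OF cs' c0 cm px] cbound(3)[OF cs' c0 cm py] unfolding a_def b_def by auto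
  define lam where "lam = (if a + b = 0 then 1/2 else b/(a+b))"
  define mu where "mu = 1 - lam"
  have lm: "lam + mu = 1" "lam*a = mu*b" "0 \<le> lam" "0 \<le> mu"
  proof -
    show "lam + mu = 1" unfolding mu_def by simp
    show "lam*a = mu*b"
    proof (cases "a + b = 0")
      case True then have "a = 0" "b = 0" using ab by auto
      then show ?thesis unfolding mu_def lam_def by simp
    next
      case False then have p: "a + b > 0" using ab by simp
      then have "mu = a/(a+b)" unfolding mu_def lam_def using False by (simp add: field_simps)
      then show ?thesis unfolding lam_def using False by (simp add: field_simps)
    qed
    show "0 \<le> lam" unfolding lam_def using ab by simp
    show "0 \<le> mu"
    proof (cases "a + b = 0")
      case True then show ?thesis unfolding mu_def lam_def by simp
    next
      case False then have p: "a + b > 0" using ab by simp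
      then have "mu = a/(a+b)" unfolding mu_def lam_def using False by (simp add: field_simps)
      then show ?thesis using ab p by simp
    qed
  qed
  define F where "F g = lam * ln ((1 + 2*a*g + g^2)/(1 - g^2)) + mu * ln ((1 - 2*b*g + g^2)/(1 - g^2))" for g
  have Fnn: "\<And>g. g^2 < 1 \<Longrightarrow> F g \<ge> 0"
    using F_props(1)[OF ab lm(1,2)] unfolding F_def by blast
  have Feps: "\<And>\<delta>. \<delta> > 0 \<Longrightarrow> \<exists>\<epsilon>>0. \<forall>g. g^2 < 1 \<and> \<delta> \<le> \<bar>g\<bar> \<longrightarrow> \<epsilon> \<le> F g"
    using F_props(2)[OF ab lm(1,2)] unfolding F_def by blast
  define L where "L k = lam * ln (PB hN m (V k) x) + mu * ln (PB hN m (V k) y)" for k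
  have alsq: "(al k)^2 < 1" for k using STEP[of k] INV[of k] by blast
  have LS: "L (Suc k) \<ge> L k + F (al k)" for k
  proof -
    obtain \<beta> where H: "(al k)^2 < 1" "\<beta>^2 < 1"
      "\<forall>j. present hN hP m j \<longrightarrow> PB hN m (V (Suc k)) j = PB hN m (V k) j
          * ((1 - 2*(al k)*c j + (al k)^2)/(1 - (al k)^2))
          * ((1 - 2*\<beta>*c j + \<beta>^2)/(1 - \<beta>^2))"
      using STEP[of k] INV[of k] by blast
    have ex: "(1 - 2*g*c x + g^2) = 1 + 2*a*g + g^2" for g unfolding a_def by simp
    have ey: "(1 - 2*g*c y + g^2) = 1 - 2*b*g + g^2" for g unfolding b_def by simp
    have Hx: "PB hN m (V (Suc k)) x = PB hN m (V k) x
          * ((1 + 2*a*(al k) + (al k)^2)/(1 - (al k)^2)) * ((1 + 2*a*\<beta> + \<beta>^2)/(1 - \<beta>^2))"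
    proof -
      have "PB hN m (V (Suc k)) x = PB hN m (V k) x
          * ((1 - 2*(al k)*c x + (al k)^2)/(1 - (al k)^2))
          * ((1 - 2*\<beta>*c x + \<beta>^2)/(1 - \<beta>^2))" using H(3) px by blast
      then show ?thesis unfolding ex .
    qed
    have Hy: "PB hN m (V (Suc k)) y = PB hN m (V k) y
          * ((1 - 2*b*(al k) + (al k)^2)/(1 - (al k)^2)) * ((1 - 2*b*\<beta> + \<beta>^2)/(1 - \<beta>^2))"
    proof -
      have "PB hN m (V (Suc k)) y = PB hN m (V k) y
          * ((1 - 2*(al k)*c y + (al k)^2)/(1 - (al k)^2))
          * ((1 - 2*\<beta>*c y + \<beta>^2)/(1 - \<beta>^2))" using H(3) py by blast
      then show ?thesis unfolding ey .
    qed
    have fx1: "(1 + 2*a*(al k) + (al k)^2)/(1 - (al k)^2) > 0" using ffpos[OF cb[OF px] H(1)] unfolding ex .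
    have fx2: "(1 + 2*a*\<beta> + \<beta>^2)/(1 - \<beta>^2) > 0" using ffpos[OF cb[OF px] H(2)] unfolding ex .
    have fy1: "(1 - 2*b*(al k) + (al k)^2)/(1 - (al k)^2) > 0" using ffpos[OF cb[OF py] H(1)] unfolding ey .
    have fy2: "(1 - 2*b*\<beta> + \<beta>^2)/(1 - \<beta>^2) > 0" using ffpos[OF cb[OF py] H(2)] unfolding ey .
    have "L (Suc k) = L k + F (al k) + F \<beta>"
      unfolding L_def F_def Hx Hy lnprod3[OF POS[OF px Px] fx1 fx2] lnprod3[OF POS[OF py Py] fy1 fy2]
      by (simp add: algebra_simps)
    then show ?thesis using Fnn[OF H(2)] by simp
  qed
  have Lle: "L k \<le> 0" for k
  proof -
    have "PB hN m (V k) x \<le> 1" using PB_le[OF px, of "V k"] INV[of k] unfolding n_def by simp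
    then have "ln (PB hN m (V k) x) \<le> 0" using POS[OF px Px, of k] by simp
    moreover have "PB hN m (V k) y \<le> 1" using PB_le[OF py, of "V k"] INV[of k] unfolding n_def by simp
    then have "ln (PB hN m (V k) y) \<le> 0" using POS[OF py Py, of k] by simp
    ultimately show ?thesis unfolding L_def using lm(3,4)
      by (simp add: add_nonpos_nonpos mult_nonneg_nonpos)
  qed
  have SB: "(\<Sum>i<k. F (al i)) \<le> L k - L 0" for k
  proof (induction k)
    case 0 then show ?case by simp
  next
    case (Suc k) then show ?case using LS[of k] by simp
  qed
  have summ: "summable (\<lambda>k. F (al k))"
  proof (rule summableI_nonneg_bounded)
    show "\<And>k. 0 \<le> F (al k)" using Fnn alsq by blast
    show "\<And>k. (\<Sum>i<k. F (al i)) \<le> - L 0" using SB Lle by (smt (verit))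
  qed
  have F0: "(\<lambda>k. F (al k)) \<longlonglongrightarrow> 0" using summable_LIMSEQ_zero[OF summ] .
  have "al \<longlonglongrightarrow> 0"
  proof (rule LIMSEQ_I)
    fix r :: real assume r: "0 < r"
    obtain \<epsilon> where e: "\<epsilon> > 0" "\<forall>g. g^2 < 1 \<and> r \<le> \<bar>g\<bar> \<longrightarrow> \<epsilon> \<le> F g" using Feps[OF r] by blast
    obtain N where N: "\<forall>k\<ge>N. norm (F (al k) - 0) < \<epsilon>" using LIMSEQ_D[OF F0 e(1)] by blast
    show "\<exists>N. \<forall>k\<ge>N. norm (al k - 0) < r"
    proof (intro exI allI impI)
      fix k assume "N \<le> k"
      then have "F (al k) < \<epsilon>" using N Fnn[OF alsq[of k]] by auto
      then have "\<not> (r \<le> \<bar>al k\<bar>)" using e(2) alsq[of k] by force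
      then show "norm (al k - 0) < r" by simp
    qed
  qed
  then show "(\<lambda>k. vinner n (aci_seq n A v0 k) (mv n A (aci_seq n A v0 k))) \<longlonglongrightarrow> 0"
    unfolding al_def V_def .
  show "\<And>k. (\<Sum>i<n. (aci_seq n A v0 k i)^2) = 1" using INV unfolding V_def by blast
qed


theorem mainTheorem15:
  fixes hasNeg hasPos :: bool and m :: nat and c s :: "nat \<Rightarrow> real"
    and v0 vstar :: "nat \<Rightarrow> real"
  defines "n \<equiv> bdim hasNeg hasPos m"
      and "A \<equiv> blockA hasNeg hasPos m c s"
  assumes m: "m \<ge> 1"
    and cs: "\<forall>j\<in>{1..m}. (c j)\<^sup>2 + (s j)\<^sup>2 = 1 \<and> s j \<noteq> 0"
    and c0: "c 0 = -1" and cm1: "c (m + 1) = 1"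
    and cmono: "\<forall>j\<le>m. c j < c (j + 1)"
    and v0unit: "vnorm n v0 = 1"
    and grade: "grade n A v0 \<ge> 2"
    and nz: "\<exists>l\<in>{1..m}. block_nz hasNeg hasPos m v0 l \<and>
               (\<exists>j\<in>{0..m+1}. block_nz hasNeg hasPos m v0 j \<and> c l * c j \<le> 0)"
    and lim: "limit_vector n (aci_seq n A v0) vstar"
  shows "vinner n vstar (mv n A vstar) = 0
       \<and> (vnorm n (mv n A vstar))\<^sup>2 - (vinner n vstar (mv n A vstar))\<^sup>2 = 1
       \<and> (INF \<alpha>. opnorm n (\<lambda>i k. A i k - \<alpha> * (if i = k then 1 else 0))) = opnorm n A
       \<and> opnorm n A = vnorm n (mv n A vstar)
       \<and> vnorm n (mv n A vstar) = 1"
proof -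
  have cm: "c (Suc m) = 1" using cm1 by simp
  have cs': "\<forall>j\<in>{1..m}. (c j)^2 + (s j)^2 = 1" using cs by auto
  have v1: "(\<Sum>i<n. (v0 i)^2) = 1" using v0unit vnorm1 by blast
  obtain l j where l: "l \<in> {1..m}" and bl: "block_nz hasNeg hasPos m v0 l"
    and bj: "block_nz hasNeg hasPos m v0 j" and clj: "c l * c j \<le> 0" using nz by blast
  have al0: "(\<lambda>k. vinner n (aci_seq n A v0 k) (mv n A (aci_seq n A v0 k))) \<longlonglongrightarrow> 0"
    using dynamics(1)[OF cs c0 cm v1[unfolded n_def] l bl bj clj] unfolding n_def A_def .
  have unit: "\<And>k. (\<Sum>i<n. (aci_seq n A v0 k i)^2) = 1"
    using dynamics(2)[OF cs c0 cm v1[unfolded n_def] l bl bj clj] unfolding n_def A_def .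
  obtain r where r: "strict_mono r" and conv: "\<forall>i<n. (\<lambda>k. aci_seq n A v0 (r k) i) \<longlonglongrightarrow> vstar i"
    using lim unfolding limit_vector_def by blast
  have T1: "(\<lambda>k. vinner n (aci_seq n A v0 (r k)) (mv n A (aci_seq n A v0 (r k))))
      \<longlonglongrightarrow> vinner n vstar (mv n A vstar)"
    unfolding vinner_alt using conv by (auto intro!: tendsto_sum tendsto_mult tendsto_const)
  have T2: "(\<lambda>k. vinner n (aci_seq n A v0 (r k)) (mv n A (aci_seq n A v0 (r k)))) \<longlonglongrightarrow> 0"
    using LIMSEQ_subseq_LIMSEQ[OF al0 r] by (simp add: o_def)
  have ast: "vinner n vstar (mv n A vstar) = 0" using LIMSEQ_unique[OF T1 T2] .
  have T3: "(\<lambda>k. \<Sum>i<n. (aci_seq n A v0 (r k) i)^2) \<longlonglongrightarrow> (\<Sum>i<n. (vstar i)^2)"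
    using conv by (auto intro!: tendsto_sum tendsto_power)
  have S: "(\<Sum>i<n. (vstar i)^2) = 1" using T3 unfolding unit by (simp add: LIMSEQ_const_iff)
  have gA: "good hasNeg hasPos m c s A" unfolding A_def by (rule good_A)
  have orthA: "\<And>x. (\<Sum>i<n. (mv n A x i)^2) = (\<Sum>i<n. (x i)^2)"
    using orth[OF gA cs'] unfolding n_def by blast
  have nA: "vnorm n (mv n A vstar) = 1" using orthA[of vstar] S vnorm1 by simp
  have vs1: "vnorm n vstar = 1" using S vnorm1 by blast
  have opA: "opnorm n A = 1"
  proof -
    have "{vnorm n (mv n A x) |x. vnorm n x = 1} = {1}"
    proof (intro equalityI subsetI)
      fix z assume "z \<in> {vnorm n (mv n A x) |x. vnorm n x = 1}"
      then obtain x where "z = vnorm n (mv n A x)" "vnorm n x = 1" by blast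
      then show "z \<in> {1}" using orthA[of x] vnorm1 by auto
    next
      fix z assume "z \<in> {1::real}"
      then show "z \<in> {vnorm n (mv n A x) |x. vnorm n x = 1}" using nA vs1 by auto
    qed
    then show ?thesis unfolding opnorm_def by simp
  qed
  have low: "opnorm n (\<lambda>i k. A i k - \<alpha> * (if i = k then 1 else 0)) \<ge> 1" for \<alpha>
  proof -
    define M where "M = (\<lambda>i k. A i k - \<alpha> * (if i = k then 1 else 0))"
    have sq: "(\<Sum>i<n. (mv n M x i)^2) = (\<Sum>i<n. (mv n A x i - \<alpha> * x i)^2)" for x
      unfolding M_def by (rule sum.cong) (simp_all add: mvI)
    have bnd: "vnorm n (mv n M x) \<le> sqrt (2 + 2*\<alpha>^2)" if "vnorm n x = 1" for x
    proof -
      have x1: "(\<Sum>i<n. (x i)^2) = 1" using that vnorm1 by blast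
      have "(\<Sum>i<n. (mv n A x i - \<alpha> * x i)^2) \<le> (\<Sum>i<n. 2*(mv n A x i)^2 + 2*\<alpha>^2*(x i)^2)"
      proof (rule sum_mono)
        fix i
        have "0 \<le> (mv n A x i + \<alpha> * x i)^2" by simp
        then show "(mv n A x i - \<alpha> * x i)^2 \<le> 2*(mv n A x i)^2 + 2*\<alpha>^2*(x i)^2"
          by (simp add: power2_eq_square algebra_simps)
      qed
      also have "\<dots> = 2 + 2*\<alpha>^2" using orthA[of x] x1
        by (simp add: sum.distrib sum_distrib_left[symmetric])
      finally show ?thesis unfolding vnorm_def sq by simp
    qed
    have mem: "vnorm n (mv n M vstar) \<in> {vnorm n (mv n M x) |x. vnorm n x = 1}" using vs1 by blast
    have "(\<Sum>i<n. (mv n M vstar i)^2) = 1 + \<alpha>^2"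
      unfolding sq sum_sq_diff orthA S using ast unfolding vinner_def by simp
    then have ge: "vnorm n (mv n M vstar) \<ge> 1" unfolding vnorm_def by simp
    have "bdd_above {vnorm n (mv n M x) |x. vnorm n x = 1}"
      using bnd by (auto intro!: bdd_aboveI[where M="sqrt (2 + 2*\<alpha>^2)"])
    then have "1 \<le> Sup {vnorm n (mv n M x) |x. vnorm n x = 1}" using cSup_upper2[OF mem ge] by blast
    then show ?thesis unfolding opnorm_def M_def .
  qed
  have at0: "opnorm n (\<lambda>i k. A i k - 0 * (if i = k then 1 else 0)) = 1" using opA by simp
  have INF1: "(INF \<alpha>. opnorm n (\<lambda>i k. A i k - \<alpha> * (if i = k then 1 else 0))) = 1"
    by (rule cInf_eq_minimum[of 1]) (use at0 low in \<open>auto simp: image_iff intro: exI[of _ 0]\<close>)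
  show ?thesis using ast nA opA INF1 by simp
qed


end
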